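(* Let $\Lambda$ be a finite graph with $N$ sites, $\mathcal{H}=\bigotimes_{x\in\Lambda}\mathfrak{h}_x$ with each $\mathfrak{h}_x$ a copy of a finite-dimensional Hilbert space $\mathfrak{h}$, $\mathfrak{h}^s\subset\mathfrak{h}$ a subspace, and $\mathrm{Sym}^N(\mathfrak{h}^s)\subset\mathcal{H}$ the totally symmetric subspace of $\bigotimes_x\mathfrak{h}^s_x$. Let $X\subset\Lambda$ be a connected subset of sites. If an operator $\hat{O}_X$ on $\mathcal{H}$ acts non-trivially only on the sites of $X$ and annihilates $\mathrm{Sym}^N(\mathfrak{h}^s)$, then $$\hat{O}_X=\sum_{x\in X}\hat{o}^{(1)}_{[x]}\hat{P}_x+\sum_{\langle x,y\rangle\subset X}\hat{o}^{(2)}_{[xy]}\hat{P}_{xy},$$ where the second sum runs over nearest-neighbour pairs with both sites in $X$, each $\hat{P}_x$ (resp. $\hat{P}_{xy}$) is a projector acting non-trivially only on site $x$ (resp. sites $x,y$) and annihilating $\mathrm{Sym}^N(\mathfrak{h}^s)$, and the operators $\hat{o}^{(1)}_{[x]},\hat{o}^{(2)}_{[xy]}$ act non-trivially only within $X$.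
   Context: For $\sigma\in\mathfrak{S}_N$, $\hat{\sigma}$ permutes tensor factors of $\mathcal{H}$. $\mathrm{Sym}^N(\mathfrak{h}^s)=\{v\in\bigotimes_x\mathfrak{h}^s_x:\hat{\sigma}v=v\ \forall\sigma\}$. An operator annihilates a subspace if it maps all its vectors to $0$. *)

theory Defs
  imports Complex_Main "HOL-Library.FuncSet"
begin

text \<open>Sites: a finite type 'a with edge relation E. One-site Hilbert space h = ('b => complex)
  for a finite basis type 'b (standard inner product). The global space
  H = tensor over sites of h is identified with functions on configurations ('a => 'b).
  Operators on H are given by their matrix kernels.\<close>

type_synonym ('a, 'b) hvec = "('a \<Rightarrow> 'b) \<Rightarrow> complex"
type_synonym ('a, 'b) hop = "('a \<Rightarrow> 'b) \<Rightarrow> ('a \<Rightarrow> 'b) \<Rightarrow> complex"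

definition op_apply :: "('a::finite, 'b::finite) hop \<Rightarrow> ('a, 'b) hvec \<Rightarrow> ('a, 'b) hvec" where
  "op_apply A v = (\<lambda>c. \<Sum>c'\<in>UNIV. A c c' * v c')"

definition op_mult :: "('a::finite, 'b::finite) hop \<Rightarrow> ('a, 'b) hop \<Rightarrow> ('a, 'b) hop" where
  "op_mult A B = (\<lambda>c c'. \<Sum>d\<in>UNIV. A c d * B d c')"

definition projector :: "('a::finite, 'b::finite) hop \<Rightarrow> bool" where
  "projector P \<longleftrightarrow> op_mult P P = P \<and> (\<forall>c c'. P c c' = cnj (P c' c))"

text \<open>A acts non-trivially only on the sites in Y: A = A_Y tensor identity on the complement.\<close>
definition acts_within :: "'a set \<Rightarrow> ('a::finite, 'b::finite) hop \<Rightarrow> bool" where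
  "acts_within Y A \<longleftrightarrow> (\<exists>B :: ('a \<Rightarrow> 'b) \<Rightarrow> ('a \<Rightarrow> 'b) \<Rightarrow> complex.
     \<forall>c c'. A c c' = (if (\<forall>x. x \<notin> Y \<longrightarrow> c x = c' x) then B (restrict c Y) (restrict c' Y) else 0))"

definition is_subspace :: "('b \<Rightarrow> complex) set \<Rightarrow> bool" where
  "is_subspace S \<longleftrightarrow> (\<lambda>_. 0) \<in> S \<and> (\<forall>u\<in>S. \<forall>w\<in>S. (\<lambda>i. u i + w i) \<in> S)
     \<and> (\<forall>a. \<forall>u\<in>S. (\<lambda>i. a * u i) \<in> S)"

definition tensor_power :: "('b \<Rightarrow> complex) set \<Rightarrow> ('a::finite, 'b) hvec set" where
  "tensor_power S = {v. \<exists>(n::nat) (a::nat \<Rightarrow> complex) (\<phi>::nat \<Rightarrow> 'a \<Rightarrow> 'b \<Rightarrow> complex).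
      (\<forall>i<n. \<forall>x. \<phi> i x \<in> S) \<and> v = (\<lambda>c. \<Sum>i<n. a i * (\<Prod>x\<in>UNIV. \<phi> i x (c x)))}"

definition perm_vec :: "('a \<Rightarrow> 'a) \<Rightarrow> ('a, 'b) hvec \<Rightarrow> ('a, 'b) hvec" where
  "perm_vec \<sigma> v = (\<lambda>c. v (c \<circ> \<sigma>))"

definition Sym :: "('b \<Rightarrow> complex) set \<Rightarrow> ('a::finite, 'b) hvec set" where
  "Sym S = {v \<in> tensor_power S. \<forall>\<sigma>. bij \<sigma> \<longrightarrow> perm_vec \<sigma> v = v}"

definition connected_in :: "('a \<Rightarrow> 'a \<Rightarrow> bool) \<Rightarrow> 'a set \<Rightarrow> bool" where
  "connected_in E X \<longleftrightarrow> X \<noteq> {} \<and>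
     (\<forall>x\<in>X. \<forall>y\<in>X. (\<lambda>u v. u \<in> X \<and> v \<in> X \<and> E u v)\<^sup>*\<^sup>* x y)"

definition edges_in :: "('a \<Rightarrow> 'a \<Rightarrow> bool) \<Rightarrow> 'a set \<Rightarrow> 'a set set" where
  "edges_in E X = {{x, y} | x y. x \<in> X \<and> y \<in> X \<and> E x y}"

end

theory Submission
  imports Defs "HOL-Analysis.Analysis" "HOL-Library.Function_Algebras"
begin


lemma subspace_closed_sum:
  assumes "is_subspace S" "finite A" "\<And>i. i \<in> A \<Longrightarrow> f i \<in> S"
  shows "(\<lambda>b. \<Sum>i\<in>A. f i b) \<in> S"
  using assms(2,3)
proof (induction A rule: finite_induct)
  case empty then show ?case using assms(1) unfolding is_subspace_def by simp
next
  case (insert a A)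
  then have "(\<lambda>b. f a b + (\<Sum>i\<in>A. f i b)) \<in> S"
    using assms(1) unfolding is_subspace_def by auto
  then show ?case using insert by simp
qed

lemma subspace_scale: "is_subspace S \<Longrightarrow> u \<in> S \<Longrightarrow> (\<lambda>i. a * u i) \<in> S"
  unfolding is_subspace_def by blast

lemma subspace_add: "is_subspace S \<Longrightarrow> u \<in> S \<Longrightarrow> w \<in> S \<Longrightarrow> (\<lambda>i. u i + w i) \<in> S"
  unfolding is_subspace_def by blast

lemma subspace_diff: "is_subspace S \<Longrightarrow> u \<in> S \<Longrightarrow> w \<in> S \<Longrightarrow> (\<lambda>i. u i - w i) \<in> S"
proof -
  assume a: "is_subspace S" "u \<in> S" "w \<in> S"
  then have "(\<lambda>i. (-1) * w i) \<in> S" using subspace_scale[OF a(1) a(3), of "-1"] by simp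
  from subspace_add[OF a(1) a(2) this] show ?thesis by simp
qed

lemma decomp_exists:
  fixes S :: "('b::finite \<Rightarrow> complex) set"
  assumes S: "is_subspace S"
  shows "\<exists>y z. y \<in> S \<and> (\<forall>w\<in>S. (\<Sum>b\<in>UNIV. cnj (z b) * w b) = 0) \<and> x = (\<lambda>b. y b + z b)"
proof -
  define V where "V = (vec_lambda ` S :: (complex^'b) set)"
  have sub: "subspace V"
    unfolding subspace_def V_def
  proof (intro conjI ballI allI)
    show "0 \<in> vec_lambda ` S"
    proof
      show "0 = vec_lambda (\<lambda>_. 0)" by (simp add: vec_eq_iff)
      show "(\<lambda>_. 0) \<in> S" using S unfolding is_subspace_def by auto
    qed
  next
    fix u w assume "u \<in> vec_lambda ` S" "w \<in> vec_lambda ` S"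
    then obtain u' w' where "u = vec_lambda u'" "w = vec_lambda w'" "u' \<in> S" "w' \<in> S" by auto
    then show "u + w \<in> vec_lambda ` S"
      by (intro image_eqI[of _ _ "\<lambda>i. u' i + w' i"]) (auto simp: vec_eq_iff intro: subspace_add[OF S])
  next
    fix r :: real and u assume "u \<in> vec_lambda ` S"
    then obtain u' where "u = vec_lambda u'" "u' \<in> S" by auto
    then show "r *\<^sub>R u \<in> vec_lambda ` S"
      by (intro image_eqI[of _ _ "\<lambda>i. of_real r * u' i"]) (simp_all add: vec_eq_iff vector_scaleR_component subspace_scale[OF S] del: scaleR_conv_of_real, simp add: scaleR_conv_of_real)
  qed
  obtain y z where y: "y \<in> span V" and z: "\<And>w. w \<in> span V \<Longrightarrow> orthogonal z w" and xyz: "vec_lambda x = y + z"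
    using orthogonal_subspace_decomp_exists[of V "vec_lambda x"] by blast
  have yV: "y \<in> V" using y span_subspace[OF order_refl span_superset sub] by simp
  then obtain y' where y': "y = vec_lambda y'" "y' \<in> S" unfolding V_def by auto
  have re0: "Re (\<Sum>b\<in>UNIV. cnj (vec_nth z b) * w b) = 0" if "w \<in> S" for w
  proof -
    have "vec_lambda w \<in> V" unfolding V_def using that by (rule imageI)
    then have "vec_lambda w \<in> span V" by (rule span_base)
    then have "z \<bullet> vec_lambda w = 0" using z orthogonal_def by blast
    moreover have "z \<bullet> vec_lambda w = (\<Sum>b\<in>UNIV. vec_nth z b \<bullet> w b)" by (simp add: inner_vec_def)
    moreover have "Re (\<Sum>b\<in>UNIV. cnj (vec_nth z b) * w b) = (\<Sum>b\<in>UNIV. vec_nth z b \<bullet> w b)"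
      by (simp add: Re_sum inner_complex_def)
    ultimately show ?thesis by simp
  qed
  show ?thesis
  proof (intro exI conjI ballI)
    show "y' \<in> S" by fact
    show "x = (\<lambda>b. y' b + vec_nth z b)"
    proof
      fix b have "vec_nth (vec_lambda x) b = vec_nth (y + z) b" using xyz by simp
      then show "x b = y' b + vec_nth z b" using y' by simp
    qed
    fix w assume w: "w \<in> S"
    let ?s = "\<Sum>b\<in>UNIV. cnj (vec_nth z b) * w b"
    have "Re ?s = 0" using re0 w by blast
    moreover have "Re (\<Sum>b\<in>UNIV. cnj (vec_nth z b) * (\<i> * w b)) = 0"
      using re0 subspace_scale[OF S w, of \<i>] by blast
    moreover have "(\<Sum>b\<in>UNIV. cnj (vec_nth z b) * (\<i> * w b)) = \<i> * ?s"
      by (simp add: sum_distrib_left algebra_simps)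
    ultimately show "?s = 0" by (simp add: complex_eq_iff)
  qed
qed
lemma sum_cnj_self_zero:
  fixes a :: "'b::finite \<Rightarrow> complex"
  assumes "(\<Sum>b\<in>UNIV. cnj (a b) * a b) = 0"
  shows "a = (\<lambda>_. 0)"
proof -
  have "(\<Sum>b\<in>UNIV. cnj (a b) * a b) = of_real (\<Sum>b\<in>UNIV. (cmod (a b))^2)"
  proof -
    have "cnj (a b) * a b = of_real ((cmod (a b))^2)" for b
      by (subst complex_norm_square) (simp add: mult.commute)
    then show ?thesis by (simp add: of_real_sum)
  qed
  with assms have "complex_of_real (\<Sum>b\<in>UNIV. (cmod (a b))^2) = 0" by metis
  then have "(\<Sum>b\<in>UNIV. (cmod (a b))^2) = 0" by (simp only: of_real_eq_0_iff)
  then have "\<forall>b\<in>UNIV. (cmod (a b))^2 = 0" by (subst (asm) sum_nonneg_eq_0_iff) auto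
  then show ?thesis by auto
qed

lemma proj_exists:
  fixes S :: "('b::finite \<Rightarrow> complex) set"
  assumes S: "is_subspace S"
  shows "\<exists>PS::'b\<Rightarrow>'b\<Rightarrow>complex. (\<forall>b'. (\<lambda>b. PS b b') \<in> S)
     \<and> (\<forall>v\<in>S. \<forall>b. (\<Sum>b'\<in>UNIV. PS b b' * v b') = v b) \<and> (\<forall>b b'. PS b b' = cnj (PS b' b))"
proof -
  define dl :: "'b \<Rightarrow> 'b \<Rightarrow> complex" where "dl b' = (\<lambda>b. if b = b' then 1 else 0)" for b'
  have "\<forall>b'. \<exists>y z. y \<in> S \<and> (\<forall>w\<in>S. (\<Sum>b\<in>UNIV. cnj (z b) * w b) = 0) \<and> dl b' = (\<lambda>b. y b + z b)"
    using decomp_exists[OF S] by blast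
  then obtain Y Z where YS: "\<And>b'. Y b' \<in> S"
     and Zo: "\<And>b' w. w \<in> S \<Longrightarrow> (\<Sum>b\<in>UNIV. cnj (Z b' b) * w b) = 0"
     and YZ: "\<And>b'. dl b' = (\<lambda>b. Y b' b + Z b' b)"
    by metis
  have YZb: "Y b' b + Z b' b = (if b = b' then 1 else 0)" for b b'
    using fun_cong[OF YZ[of b'], of b] by (simp add: dl_def)
  define PS where "PS b b' = Y b' b" for b b'
  show ?thesis
  proof (intro exI conjI allI ballI)
    fix b' show "(\<lambda>b. PS b b') \<in> S" using YS by (simp add: PS_def)
  next
    fix v assume v: "v \<in> S"
    define Yv where "Yv = (\<lambda>b. \<Sum>b'\<in>UNIV. v b' * Y b' b)"
    define Zv where "Zv = (\<lambda>b. \<Sum>b'\<in>UNIV. v b' * Z b' b)"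
    have YvS: "Yv \<in> S" unfolding Yv_def
      by (rule subspace_closed_sum[OF S]) (auto intro: subspace_scale[OF S] YS)
    have vsum: "v b = Yv b + Zv b" for b
    proof -
      have "(\<Sum>b'\<in>UNIV. v b' * (if b = b' then 1 else 0)) = (\<Sum>b'\<in>UNIV. if b = b' then v b' else 0)"
        by (rule sum.cong) auto
      then have "v b = (\<Sum>b'\<in>UNIV. v b' * (if b = b' then 1 else 0))" by simp
      also have "\<dots> = (\<Sum>b'\<in>UNIV. v b' * (Y b' b + Z b' b))" by (simp add: YZb)
      also have "\<dots> = Yv b + Zv b" by (simp add: Yv_def Zv_def algebra_simps sum.distrib)
      finally show ?thesis .
    qed
    have ZvS: "Zv \<in> S"
    proof -
      have "(\<lambda>i. v i - Yv i) \<in> S" by (rule subspace_diff[OF S v YvS])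
      moreover have "(\<lambda>i. v i - Yv i) = Zv" using vsum by (auto simp: fun_eq_iff)
      ultimately show ?thesis by simp
    qed
    have cz: "cnj (Zv b) = (\<Sum>b'\<in>UNIV. cnj (v b') * cnj (Z b' b))" for b
      by (simp add: Zv_def cnj_sum)
    have "(\<Sum>b\<in>UNIV. cnj (Zv b) * Zv b) = (\<Sum>b\<in>UNIV. \<Sum>b'\<in>UNIV. cnj (v b') * (cnj (Z b' b) * Zv b))"
      by (simp only: cz sum_distrib_right mult.assoc)
    also have "\<dots> = (\<Sum>b'\<in>UNIV. \<Sum>b\<in>UNIV. cnj (v b') * (cnj (Z b' b) * Zv b))"
      by (rule sum.swap)
    also have "\<dots> = (\<Sum>b'\<in>UNIV. cnj (v b') * (\<Sum>b\<in>UNIV. cnj (Z b' b) * Zv b))"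
      by (simp only: sum_distrib_left)
    also have "\<dots> = 0" using Zo[OF ZvS] by simp
    finally have "Zv = (\<lambda>_. 0)" by (rule sum_cnj_self_zero)
    then show "(\<Sum>b'\<in>UNIV. PS b b' * v b') = v b" for b
      using vsum[of b] by (simp add: PS_def Yv_def mult.commute)
  next
    fix b b'
    have e1: "Y b' b = (\<Sum>k\<in>UNIV. cnj (Y b k) * Y b' k)"
    proof -
      have "(\<Sum>k\<in>UNIV. cnj (if k = b then 1 else 0) * Y b' k) = (\<Sum>k\<in>UNIV. if b = k then Y b' k else 0)"
        by (rule sum.cong) auto
      then have "Y b' b = (\<Sum>k\<in>UNIV. cnj (if k = b then 1 else 0) * Y b' k)" by simp
      also have "\<dots> = (\<Sum>k\<in>UNIV. cnj (Y b k + Z b k) * Y b' k)" by (simp add: YZb)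
      also have "\<dots> = (\<Sum>k\<in>UNIV. cnj (Y b k) * Y b' k) + (\<Sum>k\<in>UNIV. cnj (Z b k) * Y b' k)"
        by (simp add: algebra_simps sum.distrib)
      also have "(\<Sum>k\<in>UNIV. cnj (Z b k) * Y b' k) = 0" using Zo[OF YS] .
      finally show ?thesis by simp
    qed
    have e2: "Y b b' = (\<Sum>k\<in>UNIV. cnj (Y b' k) * Y b k)"
    proof -
      have "(\<Sum>k\<in>UNIV. cnj (if k = b' then 1 else 0) * Y b k) = (\<Sum>k\<in>UNIV. if b' = k then Y b k else 0)"
        by (rule sum.cong) auto
      then have "Y b b' = (\<Sum>k\<in>UNIV. cnj (if k = b' then 1 else 0) * Y b k)" by simp
      also have "\<dots> = (\<Sum>k\<in>UNIV. cnj (Y b' k + Z b' k) * Y b k)" by (simp add: YZb)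
      also have "\<dots> = (\<Sum>k\<in>UNIV. cnj (Y b' k) * Y b k) + (\<Sum>k\<in>UNIV. cnj (Z b' k) * Y b k)"
        by (simp add: algebra_simps sum.distrib)
      also have "(\<Sum>k\<in>UNIV. cnj (Z b' k) * Y b k) = 0" using Zo[OF YS] .
      finally show ?thesis by simp
    qed
    show "PS b b' = cnj (PS b' b)" unfolding PS_def e1 e2 by (simp add: cnj_sum mult.commute)
  qed
qed


definition agree :: "'a set \<Rightarrow> ('a \<Rightarrow> 'b) \<Rightarrow> ('a \<Rightarrow> 'b) \<Rightarrow> bool" where
  "agree Y c d \<longleftrightarrow> (\<forall>x. x \<notin> Y \<longrightarrow> c x = d x)"

definition mrg :: "'a set \<Rightarrow> ('a \<Rightarrow> 'b) \<Rightarrow> ('a \<Rightarrow> 'b) \<Rightarrow> ('a \<Rightarrow> 'b)" where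
  "mrg Y d r = (\<lambda>x. if x \<in> Y then d x else r x)"

lemma agree_sym: "agree Y c d \<Longrightarrow> agree Y d c" unfolding agree_def by auto
lemma agree_trans: "agree Y c d \<Longrightarrow> agree Y d e \<Longrightarrow> agree Y c e" unfolding agree_def by auto
lemma agree_refl[simp]: "agree Y c c" unfolding agree_def by auto

lemma AW_iff: fixes A :: "('a::finite, 'b::finite) hop" shows "acts_within Y A \<longleftrightarrow>
   (\<forall>c c'. A c c' = (if agree Y c c' then A (restrict c Y) (restrict c' Y) else 0))"
proof
  assume "acts_within Y A"
  then obtain B where B: "\<And>c c'. A c c' = (if (\<forall>x. x \<notin> Y \<longrightarrow> c x = c' x) then B (restrict c Y) (restrict c' Y) else 0)"
    unfolding acts_within_def by blast
  show "\<forall>c c'. A c c' = (if agree Y c c' then A (restrict c Y) (restrict c' Y) else 0)"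
  proof (intro allI)
    fix c c' :: "'a \<Rightarrow> 'b"
    let ?rc = "restrict c Y"
    let ?rd = "restrict c' Y"
    have r: "restrict ?rc Y = ?rc" "restrict ?rd Y = ?rd" by (auto simp: restrict_def)
    have cond: "\<forall>x. x \<notin> Y \<longrightarrow> ?rc x = ?rd x" by (simp add: restrict_def)
    have "A ?rc ?rd = B (restrict ?rc Y) (restrict ?rd Y)"
      using B[of ?rc ?rd] by (simp only: if_P[OF cond])
    then have "A ?rc ?rd = B ?rc ?rd" by (simp only: r)
    then show "A c c' = (if agree Y c c' then A ?rc ?rd else 0)"
      using B[of c c'] unfolding agree_def by auto
  qed
next
  assume "\<forall>c c'. A c c' = (if agree Y c c' then A (restrict c Y) (restrict c' Y) else 0)"
  then show "acts_within Y A" unfolding acts_within_def agree_def by blast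
qed

lemma AW_out: "acts_within Y A \<Longrightarrow> \<not> agree Y c c' \<Longrightarrow> A c c' = 0"
  by (subst (asm) AW_iff) metis

lemma AW_loc:
  assumes "acts_within Y A" "agree Y c c'" "agree Y d d'" "\<forall>x\<in>Y. c x = d x" "\<forall>x\<in>Y. c' x = d' x"
  shows "A c c' = A d d'"
proof -
  have "restrict c Y = restrict d Y" "restrict c' Y = restrict d' Y"
    using assms(4,5) by (auto simp: restrict_def)
  with assms(1-3) show ?thesis by (subst (1 2) AW_iff[THEN iffD1, OF assms(1)]) simp
qed

lemma AW_intro:
  assumes "\<And>c c'. \<not> agree Y c c' \<Longrightarrow> A c c' = 0"
    and "\<And>c c' d d'. agree Y c c' \<Longrightarrow> agree Y d d' \<Longrightarrow> \<forall>x\<in>Y. c x = d x \<Longrightarrow> \<forall>x\<in>Y. c' x = d' x \<Longrightarrow> A c c' = A d d'"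
  shows "acts_within Y A"
  unfolding AW_iff
proof (intro allI)
  fix c c'
  show "A c c' = (if agree Y c c' then A (restrict c Y) (restrict c' Y) else 0)"
  proof (cases "agree Y c c'")
    case True
    have "agree Y (restrict c Y) (restrict c' Y)" by (simp add: agree_def)
    with True show ?thesis using assms(2)[of c c' "restrict c Y" "restrict c' Y"] by simp
  qed (simp add: assms(1))
qed

lemma fiber_reindex:
  fixes f g :: "('a::finite \<Rightarrow> 'b::finite) \<Rightarrow> 'c::comm_monoid_add"
  assumes f0: "\<And>d. \<not> agree Y d c \<Longrightarrow> f d = 0" and g0: "\<And>d. \<not> agree Y d c' \<Longrightarrow> g d = 0"
    and fg: "\<And>d. agree Y d c \<Longrightarrow> f d = g (mrg Y d c')"
  shows "(\<Sum>d\<in>UNIV. f d) = (\<Sum>d\<in>UNIV. g d)"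
proof -
  have "(\<Sum>d\<in>UNIV. f d) = (\<Sum>d\<in>{d. agree Y d c}. f d)"
    by (rule sum.mono_neutral_right) (auto simp: f0)
  also have "\<dots> = (\<Sum>d\<in>{d. agree Y d c'}. g d)"
  proof (rule sum.reindex_bij_witness[where i="\<lambda>d. mrg Y d c" and j="\<lambda>d. mrg Y d c'"])
    fix a assume "a \<in> {d. agree Y d c}"
    then show "mrg Y (mrg Y a c') c = a" "mrg Y a c' \<in> {d. agree Y d c'}" "g (mrg Y a c') = f a"
      by (auto simp: mrg_def agree_def fun_eq_iff fg)
  next
    fix b assume "b \<in> {d. agree Y d c'}"
    then show "mrg Y (mrg Y b c) c' = b" "mrg Y b c \<in> {d. agree Y d c}"
      by (auto simp: mrg_def agree_def fun_eq_iff)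
  qed
  also have "\<dots> = (\<Sum>d\<in>UNIV. g d)"
    by (rule sum.mono_neutral_left) (auto simp: g0)
  finally show ?thesis .
qed

definition Idk :: "('a::finite, 'b::finite) hop" where "Idk c c' = (if c = c' then 1 else 0)"
definition osc :: "complex \<Rightarrow> ('a::finite, 'b::finite) hop \<Rightarrow> ('a, 'b) hop" where "osc k A = (\<lambda>c c'. k * A c c')"
definition lift :: "'a \<Rightarrow> ('b \<Rightarrow> 'b \<Rightarrow> complex) \<Rightarrow> ('a::finite, 'b::finite) hop" where
  "lift x M = (\<lambda>c c'. if agree {x} c c' then M (c x) (c' x) else 0)"
definition Pm :: "('a \<Rightarrow> 'a) \<Rightarrow> ('a::finite, 'b::finite) hop" where
  "Pm \<sigma> = (\<lambda>c c'. if c' = c \<circ> \<sigma> then 1 else 0)"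

lemma sum_kapply: "(sum F A) c c' = (\<Sum>i\<in>A. F i c c')"
  by (induction A rule: infinite_finite_induct) auto

lemma op_mult_apply: "op_mult A B c c' = op_apply A (\<lambda>d. B d c') c"
  by (simp add: op_mult_def op_apply_def)

lemma op_apply_Id[simp]: "op_apply Idk v = v"
proof
  fix c
  have "(\<Sum>c'\<in>UNIV. Idk c c' * v c') = (\<Sum>c'\<in>UNIV. if c = c' then v c' else 0)"
    by (rule sum.cong) (auto simp: Idk_def)
  then show "op_apply Idk v c = v c" by (simp add: op_apply_def)
qed

lemma op_apply_Pm: "op_apply (Pm \<sigma>) v c = v (c \<circ> \<sigma>)"
proof -
  have "(\<Sum>c'\<in>UNIV. Pm \<sigma> c c' * v c') = (\<Sum>c'\<in>UNIV. if c \<circ> \<sigma> = c' then v c' else 0)"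
    by (rule sum.cong) (auto simp: Pm_def)
  then show ?thesis by (simp add: op_apply_def)
qed

lemma op_apply_lift: "op_apply (lift x M) v c = (\<Sum>b\<in>UNIV. M (c x) b * v (c(x := b)))"
proof -
  let ?F = "\<lambda>c'. lift x M c c' * v c'"
  have "op_apply (lift x M) v c = (\<Sum>c'\<in>range (\<lambda>b. c(x := b)). ?F c')"
    unfolding op_apply_def
  proof (rule sum.mono_neutral_right)
    show "\<forall>i\<in>UNIV - range (\<lambda>b. c(x := b)). ?F i = 0"
    proof
      fix c' assume "c' \<in> UNIV - range (\<lambda>b. c(x := b))"
      have "\<not> agree {x} c c'"
      proof
        assume "agree {x} c c'"
        then have "c' = c(x := c' x)" by (auto simp: agree_def fun_eq_iff)
        then show False using \<open>c' \<in> UNIV - range (\<lambda>b. c(x := b))\<close> by blast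
      qed
      then show "?F c' = 0" by (simp add: lift_def)
    qed
  qed auto
  also have "\<dots> = (\<Sum>b\<in>UNIV. ?F (c(x := b)))"
    by (subst sum.reindex) (auto simp: inj_on_def fun_eq_iff split: if_splits)
  also have "\<dots> = (\<Sum>b\<in>UNIV. M (c x) b * v (c(x := b)))"
    by (rule sum.cong) (auto simp: lift_def agree_def)
  finally show ?thesis .
qed

lemma op_apply_add: "op_apply (A + B) v c = op_apply A v c + op_apply B v c"
  by (simp add: op_apply_def algebra_simps sum.distrib)
lemma op_apply_diff: "op_apply (A - B) v c = op_apply A v c - op_apply B v c"
  by (simp add: op_apply_def algebra_simps sum_subtractf)
lemma op_apply_osc: "op_apply (osc k A) v c = k * op_apply A v c"
  by (simp add: op_apply_def osc_def sum_distrib_left mult.assoc)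

lemma op_mult_add_right: "op_mult L (M + N) = op_mult L M + op_mult L N"
  by (simp add: op_mult_def fun_eq_iff algebra_simps sum.distrib)
lemma op_mult_add_left: "op_mult (M + N) R = op_mult M R + op_mult N R"
  by (simp add: op_mult_def fun_eq_iff algebra_simps sum.distrib)
lemma op_mult_diff_right: "op_mult L (M - N) = op_mult L M - op_mult L N"
  by (simp add: op_mult_def fun_eq_iff algebra_simps sum_subtractf)
lemma op_mult_diff_left: "op_mult (M - N) R = op_mult M R - op_mult N R"
  by (simp add: op_mult_def fun_eq_iff algebra_simps sum_subtractf)
lemma op_mult_osc_right: "op_mult L (osc k M) = osc k (op_mult L M)"
  by (simp add: op_mult_def osc_def fun_eq_iff sum_distrib_left algebra_simps)
lemma op_mult_osc_left: "op_mult (osc k L) M = osc k (op_mult L M)"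
  by (simp add: op_mult_def osc_def fun_eq_iff sum_distrib_left algebra_simps)
lemma op_mult_zero_left[simp]: "op_mult 0 M = 0"
  by (simp add: op_mult_def fun_eq_iff)
lemma op_mult_zero_right[simp]: "op_mult M 0 = 0"
  by (simp add: op_mult_def fun_eq_iff)
lemma op_mult_Id_left[simp]: "op_mult Idk M = M"
  by (simp add: op_mult_apply fun_eq_iff)
lemma op_mult_Id_right[simp]: "op_mult M Idk = M"
proof (intro ext)
  fix c c'
  have "(\<Sum>d\<in>UNIV. M c d * Idk d c') = (\<Sum>d\<in>UNIV. if d = c' then M c d else 0)"
    by (rule sum.cong) (auto simp: Idk_def)
  then show "op_mult M Idk c c' = M c c'" by (simp add: op_mult_def)
qed
lemma op_mult_sum_right: "op_mult L (sum F A) = (\<Sum>i\<in>A. op_mult L (F i))"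
proof (intro ext)
  fix c c'
  have "op_mult L (sum F A) c c' = (\<Sum>d\<in>UNIV. \<Sum>i\<in>A. L c d * F i d c')"
    by (simp add: op_mult_def sum_kapply sum_distrib_left)
  also have "\<dots> = (\<Sum>i\<in>A. \<Sum>d\<in>UNIV. L c d * F i d c')" by (rule sum.swap)
  finally show "op_mult L (sum F A) c c' = (\<Sum>i\<in>A. op_mult L (F i)) c c'"
    by (simp add: op_mult_def sum_kapply)
qed
lemma op_mult_sum_left: "op_mult (sum F A) R = (\<Sum>i\<in>A. op_mult (F i) R)"
proof (intro ext)
  fix c c'
  have "op_mult (sum F A) R c c' = (\<Sum>d\<in>UNIV. \<Sum>i\<in>A. F i c d * R d c')"
    by (simp add: op_mult_def sum_kapply sum_distrib_right)
  also have "\<dots> = (\<Sum>i\<in>A. \<Sum>d\<in>UNIV. F i c d * R d c')" by (rule sum.swap)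
  finally show "op_mult (sum F A) R c c' = (\<Sum>i\<in>A. op_mult (F i) R) c c'"
    by (simp add: op_mult_def sum_kapply)
qed
lemma op_mult_assoc: "op_mult (op_mult A B) C = op_mult A (op_mult B C)"
proof (intro ext)
  fix c c'
  have "op_mult (op_mult A B) C c c' = (\<Sum>d\<in>UNIV. \<Sum>e\<in>UNIV. A c e * B e d * C d c')"
    by (simp add: op_mult_def sum_distrib_right)
  also have "\<dots> = (\<Sum>e\<in>UNIV. \<Sum>d\<in>UNIV. A c e * B e d * C d c')" by (rule sum.swap)
  also have "\<dots> = op_mult A (op_mult B C) c c'"
    by (simp add: op_mult_def sum_distrib_left mult.assoc)
  finally show "op_mult (op_mult A B) C c c' = op_mult A (op_mult B C) c c'" .
qed

lemma Pm_comp: "Pm (\<sigma> \<circ> \<rho>) = op_mult (Pm \<sigma>) (Pm \<rho>)"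
  by (simp add: fun_eq_iff op_mult_apply op_apply_Pm) (simp add: Pm_def o_assoc)

lemma Pm_id: "Pm id = Idk"
  by (auto simp: fun_eq_iff Pm_def Idk_def)

lemma agree_upd[simp]: "agree {x} (c(x := b)) c' = agree {x} c c'"
  by (auto simp: agree_def)

lemma lift_mult: "op_mult (lift x M) (lift x N) = lift x (\<lambda>b b'. \<Sum>k\<in>UNIV. M b k * N k b')"
proof (intro ext)
  fix c c'
  have "op_mult (lift x M) (lift x N) c c' = (\<Sum>b\<in>UNIV. M (c x) b * lift x N (c(x := b)) c')"
    by (simp add: op_mult_apply op_apply_lift)
  also have "\<dots> = (if agree {x} c c' then (\<Sum>b\<in>UNIV. M (c x) b * N b (c' x)) else 0)"
    by (auto simp: lift_def intro!: sum.cong)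
  finally show "op_mult (lift x M) (lift x N) c c' = lift x (\<lambda>b b'. \<Sum>k\<in>UNIV. M b k * N k b') c c'"
    by (simp add: lift_def)
qed

lemma Id_lift: "Idk = lift x (\<lambda>b b'. if b = b' then 1 else 0)"
  by (auto simp: fun_eq_iff Idk_def lift_def agree_def)

lemma lift_diff: "lift x M - lift x N = lift x (\<lambda>b b'. M b b' - N b b')"
  by (auto simp: fun_eq_iff lift_def)



lemma AW_add: fixes A B :: "('a::finite, 'b::finite) hop"
  assumes "acts_within Y A" "acts_within Y B" shows "acts_within Y (A + B)"
proof (rule AW_intro)
  fix c c' :: "'a \<Rightarrow> 'b" assume "\<not> agree Y c c'"
  then show "(A + B) c c' = 0" using AW_out[OF assms(1)] AW_out[OF assms(2)] by (simp add: osc_def)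
next
  fix c c' d d' :: "'a \<Rightarrow> 'b"
  assume h: "agree Y c c'" "agree Y d d'" "\<forall>x\<in>Y. c x = d x" "\<forall>x\<in>Y. c' x = d' x"
  show "(A + B) c c' = (A + B) d d'" using AW_loc[OF assms(1) h] AW_loc[OF assms(2) h] by (simp add: osc_def)
qed

lemma AW_diff: fixes A B :: "('a::finite, 'b::finite) hop"
  assumes "acts_within Y A" "acts_within Y B" shows "acts_within Y (A - B)"
proof (rule AW_intro)
  fix c c' :: "'a \<Rightarrow> 'b" assume "\<not> agree Y c c'"
  then show "(A - B) c c' = 0" using AW_out[OF assms(1)] AW_out[OF assms(2)] by (simp add: osc_def)
next
  fix c c' d d' :: "'a \<Rightarrow> 'b"
  assume h: "agree Y c c'" "agree Y d d'" "\<forall>x\<in>Y. c x = d x" "\<forall>x\<in>Y. c' x = d' x"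
  show "(A - B) c c' = (A - B) d d'" using AW_loc[OF assms(1) h] AW_loc[OF assms(2) h] by (simp add: osc_def)
qed

lemma AW_osc0: fixes A B :: "('a::finite, 'b::finite) hop"
  assumes "acts_within Y A" "acts_within Y B" shows "acts_within Y (osc k A)"
proof (rule AW_intro)
  fix c c' :: "'a \<Rightarrow> 'b" assume "\<not> agree Y c c'"
  then show "(osc k A) c c' = 0" using AW_out[OF assms(1)] AW_out[OF assms(2)] by (simp add: osc_def)
next
  fix c c' d d' :: "'a \<Rightarrow> 'b"
  assume h: "agree Y c c'" "agree Y d d'" "\<forall>x\<in>Y. c x = d x" "\<forall>x\<in>Y. c' x = d' x"
  show "(osc k A) c c' = (osc k A) d d'" using AW_loc[OF assms(1) h] AW_loc[OF assms(2) h] by (simp add: osc_def)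
qed

lemma AW_osc: "acts_within Y A \<Longrightarrow> acts_within Y (osc k A)"
  using AW_osc0 by blast

lemma AW_zero: "acts_within Y (0 :: ('a::finite, 'b::finite) hop)"
  by (rule AW_intro) auto
lemma AW_sum: "(\<And>i. i \<in> I \<Longrightarrow> acts_within Y (F i)) \<Longrightarrow> acts_within Y (sum F I)"
  by (induction I rule: infinite_finite_induct) (auto intro: AW_zero AW_add)
lemma AW_Id: "acts_within Y Idk"
proof (rule AW_intro)
  fix c c' :: "'a \<Rightarrow> 'b" assume "\<not> agree Y c c'"
  then show "Idk c c' = 0" by (auto simp: Idk_def)
next
  fix c c' d d' :: "'a \<Rightarrow> 'b"
  assume "agree Y c c'" "agree Y d d'" "\<forall>x\<in>Y. c x = d x" "\<forall>x\<in>Y. c' x = d' x"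
  then have "c = c' \<longleftrightarrow> d = d'" unfolding agree_def fun_eq_iff by metis
  then show "Idk c c' = Idk d d'" by (simp add: Idk_def)
qed

lemma AW_mono: fixes A :: "('a::finite, 'b::finite) hop" assumes "Y \<subseteq> Z" "acts_within Y A" shows "acts_within Z A"
proof (rule AW_intro)
  fix c c' :: "'a \<Rightarrow> 'b" assume "\<not> agree Z c c'"
  then have "\<not> agree Y c c'" using assms(1) unfolding agree_def by blast
  then show "A c c' = 0" using AW_out[OF assms(2)] by blast
next
  fix c c' d d' :: "'a \<Rightarrow> 'b"
  assume h: "agree Z c c'" "agree Z d d'" "\<forall>x\<in>Z. c x = d x" "\<forall>x\<in>Z. c' x = d' x"
  have eq: "agree Y c c' \<longleftrightarrow> agree Y d d'"
    using h unfolding agree_def by (metis)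
  show "A c c' = A d d'"
  proof (cases "agree Y c c'")
    case True
    then show ?thesis using eq h assms by (intro AW_loc[OF assms(2)]) auto
  next
    case False
    then show ?thesis using eq AW_out[OF assms(2)] by metis
  qed
qed

lemma AW_mult: fixes A B :: "('a::finite, 'b::finite) hop" assumes A: "acts_within Y A" and B: "acts_within Y B" shows "acts_within Y (op_mult A B)"
proof (rule AW_intro)
  fix c c' :: "'a \<Rightarrow> 'b" assume nc: "\<not> agree Y c c'"
  have "A c d * B d c' = 0" for d
  proof (cases "agree Y c d")
    case True
    then have "\<not> agree Y d c'" using nc agree_trans by blast
    then show ?thesis using AW_out[OF B] by simp
  qed (simp add: AW_out[OF A])
  then show "op_mult A B c c' = 0" unfolding op_mult_def by (simp add: sum.neutral)
next
  fix c c' d d' :: "'a \<Rightarrow> 'b"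
  assume h: "agree Y c c'" "agree Y d d'" "\<forall>x\<in>Y. c x = d x" "\<forall>x\<in>Y. c' x = d' x"
  show "op_mult A B c c' = op_mult A B d d'"
    unfolding op_mult_def
  proof (rule fiber_reindex[where c=c and c'=d and Y=Y])
    fix e assume "\<not> agree Y e c"
    then show "A c e * B e c' = 0" using AW_out[OF A] agree_sym by fastforce
  next
    fix e assume "\<not> agree Y e d"
    then show "A d e * B e d' = 0" using AW_out[OF A] agree_sym by fastforce
  next
    fix e assume e: "agree Y e c"
    have "A c e = A d (mrg Y e d)"
      by (rule AW_loc[OF A]) (use e h in \<open>auto simp: agree_def mrg_def\<close>)
    moreover have "B e c' = B (mrg Y e d) d'"
      by (rule AW_loc[OF B]) (use e h in \<open>auto simp: agree_def mrg_def\<close>)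
    ultimately show "A c e * B e c' = A d (mrg Y e d) * B (mrg Y e d) d'" by simp
  qed
qed

lemma AW_lift: "acts_within {x} (lift x M)"
  by (rule AW_intro) (auto simp: lift_def)

lemma AW_Pm: assumes "\<sigma> permutes Y" shows "acts_within Y (Pm \<sigma>)"
proof (rule AW_intro)
  fix c c' :: "'a \<Rightarrow> 'b" assume "\<not> agree Y c c'"
  then have "c' \<noteq> c \<circ> \<sigma>" using assms unfolding agree_def permutes_def by auto
  then show "Pm \<sigma> c c' = 0" by (simp add: Pm_def)
next
  fix c c' d d' :: "'a \<Rightarrow> 'b"
  assume h: "agree Y c c'" "agree Y d d'" "\<forall>x\<in>Y. c x = d x" "\<forall>x\<in>Y. c' x = d' x"
  have img: "x \<in> Y \<Longrightarrow> \<sigma> x \<in> Y" for x using assms by (simp add: permutes_in_image)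
  have out: "x \<notin> Y \<Longrightarrow> \<sigma> x = x" for x using assms by (simp add: permutes_not_in)
  have "c' = c \<circ> \<sigma> \<longleftrightarrow> (\<forall>x\<in>Y. c' x = c (\<sigma> x))"
    using h(1) out unfolding agree_def fun_eq_iff o_def by metis
  moreover have "d' = d \<circ> \<sigma> \<longleftrightarrow> (\<forall>x\<in>Y. d' x = d (\<sigma> x))"
    using h(2) out unfolding agree_def fun_eq_iff o_def by metis
  moreover have "(\<forall>x\<in>Y. c' x = c (\<sigma> x)) \<longleftrightarrow> (\<forall>x\<in>Y. d' x = d (\<sigma> x))"
    using h(3,4) img by auto
  ultimately show "Pm \<sigma> c c' = Pm \<sigma> d d'" by (simp add: Pm_def)
qed



definition InI :: "'a set \<Rightarrow> 'a set set \<Rightarrow> ('a \<Rightarrow> ('a::finite, 'b::finite) hop) \<Rightarrow> ('a set \<Rightarrow> ('a, 'b) hop) \<Rightarrow> ('a, 'b) hop \<Rightarrow> bool" where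
  "InI X Ed P1 P2 M \<longleftrightarrow> (\<exists>T1 T2. (\<forall>x\<in>X. acts_within X (T1 x)) \<and> (\<forall>e\<in>Ed. acts_within X (T2 e))
      \<and> M = (\<Sum>x\<in>X. op_mult (T1 x) (P1 x)) + (\<Sum>e\<in>Ed. op_mult (T2 e) (P2 e)))"

lemma InI_zero: "InI X Ed P1 P2 0"
  unfolding InI_def by (rule exI[of _ "\<lambda>_. 0"], rule exI[of _ "\<lambda>_. 0"]) (simp add: AW_zero)

lemma InI_add: assumes "InI X Ed P1 P2 M" "InI X Ed P1 P2 N" shows "InI X Ed P1 P2 (M + N)"
proof -
  obtain T1 T2 where a: "\<forall>x\<in>X. acts_within X (T1 x)" "\<forall>e\<in>Ed. acts_within X (T2 e)"
    "M = (\<Sum>x\<in>X. op_mult (T1 x) (P1 x)) + (\<Sum>e\<in>Ed. op_mult (T2 e) (P2 e))"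
    using assms(1) unfolding InI_def by blast
  obtain U1 U2 where b: "\<forall>x\<in>X. acts_within X (U1 x)" "\<forall>e\<in>Ed. acts_within X (U2 e)"
    "N = (\<Sum>x\<in>X. op_mult (U1 x) (P1 x)) + (\<Sum>e\<in>Ed. op_mult (U2 e) (P2 e))"
    using assms(2) unfolding InI_def by blast
  show ?thesis unfolding InI_def
  proof (intro exI conjI)
    show "\<forall>x\<in>X. acts_within X ((\<lambda>x. T1 x + U1 x) x)" using a b by (auto intro: AW_add)
    show "\<forall>e\<in>Ed. acts_within X ((\<lambda>e. T2 e + U2 e) e)" using a b by (auto intro: AW_add)
    show "M + N = (\<Sum>x\<in>X. op_mult ((\<lambda>x. T1 x + U1 x) x) (P1 x)) + (\<Sum>e\<in>Ed. op_mult ((\<lambda>e. T2 e + U2 e) e) (P2 e))"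
      unfolding a(3) b(3) by (simp add: op_mult_add_left sum.distrib algebra_simps)
  qed
qed

lemma InI_lmult: assumes "acts_within X L" "InI X Ed P1 P2 M" shows "InI X Ed P1 P2 (op_mult L M)"
proof -
  obtain T1 T2 where a: "\<forall>x\<in>X. acts_within X (T1 x)" "\<forall>e\<in>Ed. acts_within X (T2 e)"
    "M = (\<Sum>x\<in>X. op_mult (T1 x) (P1 x)) + (\<Sum>e\<in>Ed. op_mult (T2 e) (P2 e))"
    using assms(2) unfolding InI_def by blast
  show ?thesis unfolding InI_def
  proof (intro exI conjI)
    show "\<forall>x\<in>X. acts_within X ((\<lambda>x. op_mult L (T1 x)) x)" using a assms(1) by (auto intro: AW_mult)
    show "\<forall>e\<in>Ed. acts_within X ((\<lambda>e. op_mult L (T2 e)) e)" using a assms(1) by (auto intro: AW_mult)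
    show "op_mult L M = (\<Sum>x\<in>X. op_mult ((\<lambda>x. op_mult L (T1 x)) x) (P1 x)) + (\<Sum>e\<in>Ed. op_mult ((\<lambda>e. op_mult L (T2 e)) e) (P2 e))"
      unfolding a(3) by (simp add: op_mult_add_right op_mult_sum_right op_mult_assoc)
  qed
qed

lemma InI_P1: assumes "x \<in> X" "finite X" shows "InI X Ed P1 P2 (P1 x)"
  unfolding InI_def
proof (intro exI conjI)
  show "\<forall>y\<in>X. acts_within X ((\<lambda>y. if y = x then Idk else 0) y)" by (auto intro: AW_Id AW_zero)
  show "\<forall>e\<in>Ed. acts_within X ((\<lambda>_. 0) e)" by (auto intro: AW_zero)
  have "(\<Sum>y\<in>X. op_mult (if y = x then Idk else 0) (P1 y)) = (\<Sum>y\<in>X. if y = x then P1 y else 0)"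
    by (rule sum.cong) auto
  also have "\<dots> = P1 x" using assms by simp
  finally show "P1 x = (\<Sum>y\<in>X. op_mult ((\<lambda>y. if y = x then Idk else 0) y) (P1 y)) + (\<Sum>e\<in>Ed. op_mult ((\<lambda>_. 0) e) (P2 e))"
    by simp
qed

lemma InI_P2: assumes "e \<in> Ed" "finite Ed" shows "InI X Ed P1 P2 (P2 e)"
  unfolding InI_def
proof (intro exI conjI)
  show "\<forall>y\<in>X. acts_within X ((\<lambda>_. 0) y)" by (auto intro: AW_zero)
  show "\<forall>f\<in>Ed. acts_within X ((\<lambda>f. if f = e then Idk else 0) f)" by (auto intro: AW_Id AW_zero)
  have "(\<Sum>f\<in>Ed. op_mult (if f = e then Idk else 0) (P2 f)) = (\<Sum>f\<in>Ed. if f = e then P2 f else 0)"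
    by (rule sum.cong) auto
  also have "\<dots> = P2 e" using assms by simp
  finally show "P2 e = (\<Sum>y\<in>X. op_mult ((\<lambda>_. 0) y) (P1 y)) + (\<Sum>f\<in>Ed. op_mult ((\<lambda>f. if f = e then Idk else 0) f) (P2 f))"
    by simp
qed

lemma InI_sum: "(\<And>i. i \<in> I \<Longrightarrow> InI X Ed P1 P2 (F i)) \<Longrightarrow> InI X Ed P1 P2 (sum F I)"
  by (induction I rule: infinite_finite_induct) (auto intro: InI_zero InI_add)

lemma InI_osc: assumes "InI X Ed P1 P2 M" shows "InI X Ed P1 P2 (osc k M)"
proof -
  have "InI X Ed P1 P2 (op_mult (osc k Idk) M)" by (rule InI_lmult[OF AW_osc[OF AW_Id] assms])
  then show ?thesis by (simp add: op_mult_osc_left)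
qed

lemma InI_diff: assumes "InI X Ed P1 P2 M" "InI X Ed P1 P2 N" shows "InI X Ed P1 P2 (M - N)"
proof -
  have "M - N = M + osc (-1) N" by (simp add: fun_eq_iff osc_def)
  then show ?thesis using InI_add[OF assms(1) InI_osc[OF assms(2)], of "-1"] by (simp only:)
qed



lemma alt_sum_Pow: "finite B \<Longrightarrow> (\<Sum>U\<in>Pow B. (-1::complex) ^ card U) = (if B = {} then 1 else 0)"
proof (induction B rule: finite_induct)
  case empty then show ?case by simp
next
  case (insert b B)
  have disj: "Pow B \<inter> insert b ` Pow B = {}" using insert by auto
  have inj: "inj_on (insert b) (Pow B)" using insert by (auto simp: inj_on_def)
  have "(\<Sum>U\<in>insert b ` Pow B. (-1::complex) ^ card U) = (\<Sum>U\<in>Pow B. (-1) ^ card (insert b U))"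
    by (rule sum.reindex[OF inj, unfolded o_def])
  also have "\<dots> = (\<Sum>U\<in>Pow B. - ((-1) ^ card U))"
  proof (rule sum.cong)
    fix U assume "U \<in> Pow B"
    then have "finite U" "b \<notin> U" using insert finite_subset by auto
    then show "(-1::complex) ^ card (insert b U) = - ((-1) ^ card U)" by simp
  qed simp
  finally have "(\<Sum>U\<in>Pow (insert b B). (-1::complex) ^ card U) = (\<Sum>U\<in>Pow B. (-1) ^ card U) + (\<Sum>U\<in>Pow B. - ((-1) ^ card U))"
    unfolding Pow_insert using insert disj by (subst sum.union_disjoint) auto
  then show ?case by (simp add: sum_negf)
qed

lemma alt_sum_sup:
  assumes X: "finite X" and K: "K \<subseteq> X"
  shows "(\<Sum>T\<in>Pow X. if K \<subseteq> T then (-1::complex) ^ card (X - T) else 0) = (if K = X then 1 else 0)"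
proof -
  have "(\<Sum>T\<in>Pow X. if K \<subseteq> T then (-1::complex) ^ card (X - T) else 0) = (\<Sum>T\<in>{T\<in>Pow X. K \<subseteq> T}. (-1) ^ card (X - T))"
    using sum.inter_filter[of "Pow X" "\<lambda>T. (-1::complex) ^ card (X - T)" "\<lambda>T. K \<subseteq> T"] X by simp
  also have "\<dots> = (\<Sum>U\<in>Pow (X - K). (-1) ^ card U)"
  proof (rule sum.reindex_bij_witness[where i="\<lambda>U. X - U" and j="\<lambda>T. X - T"])
    fix T assume "T \<in> {T\<in>Pow X. K \<subseteq> T}"
    then show "X - (X - T) = T" "X - T \<in> Pow (X - K)" "(-1::complex) ^ card (X - T) = (-1) ^ card (X - T)" by auto
  next
    fix U assume "U \<in> Pow (X - K)"
    then show "X - (X - U) = U" "X - U \<in> {T\<in>Pow X. K \<subseteq> T}" using K by auto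
  qed
  also have "\<dots> = (if K = X then 1 else 0)" using X K by (simp add: alt_sum_Pow)
  finally show ?thesis .
qed

lemma polar:
  fixes g :: "'a \<Rightarrow> 'a \<Rightarrow> complex"
  assumes X: "finite X"
  shows "(\<Sum>\<sigma>\<in>{p. p permutes X}. \<Prod>y\<in>X. g y (\<sigma> y)) = (\<Sum>T\<in>Pow X. (-1) ^ card (X - T) * (\<Prod>y\<in>X. \<Sum>x\<in>T. g y x))"
proof -
  let ?P = "PiE X (\<lambda>_. X)"
  have fP: "finite ?P" using X by (simp add: finite_PiE)
  have "(\<Sum>T\<in>Pow X. (-1) ^ card (X - T) * (\<Prod>y\<in>X. \<Sum>x\<in>T. g y x))
      = (\<Sum>T\<in>Pow X. \<Sum>k\<in>?P. if k ` X \<subseteq> T then (-1) ^ card (X - T) * (\<Prod>y\<in>X. g y (k y)) else 0)"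
  proof (rule sum.cong[OF refl])
    fix T assume T: "T \<in> Pow X"
    then have fT: "finite T" using X finite_subset by auto
    have "(\<Prod>y\<in>X. \<Sum>x\<in>T. g y x) = (\<Sum>k\<in>PiE X (\<lambda>_. T). \<Prod>y\<in>X. g y (k y))"
      using X fT by (rule prod_sum_PiE)
    also have "PiE X (\<lambda>_. T) = {k\<in>?P. k ` X \<subseteq> T}" using T by (auto simp: PiE_def Pi_def)
    also have "(\<Sum>k\<in>{k\<in>?P. k ` X \<subseteq> T}. \<Prod>y\<in>X. g y (k y)) = (\<Sum>k\<in>?P. if k ` X \<subseteq> T then \<Prod>y\<in>X. g y (k y) else 0)"
      using fP by (simp add: sum.inter_filter)
    finally show "(-1) ^ card (X - T) * (\<Prod>y\<in>X. \<Sum>x\<in>T. g y x) = (\<Sum>k\<in>?P. if k ` X \<subseteq> T then (-1) ^ card (X - T) * (\<Prod>y\<in>X. g y (k y)) else 0)"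
      by (simp add: sum_distrib_left if_distrib cong: if_cong)
  qed
  also have "\<dots> = (\<Sum>k\<in>?P. \<Sum>T\<in>Pow X. if k ` X \<subseteq> T then (-1) ^ card (X - T) * (\<Prod>y\<in>X. g y (k y)) else 0)"
    by (rule sum.swap)
  also have "\<dots> = (\<Sum>k\<in>?P. if k ` X = X then (\<Prod>y\<in>X. g y (k y)) else 0)"
  proof (rule sum.cong[OF refl])
    fix k assume k: "k \<in> ?P"
    then have kX: "k ` X \<subseteq> X" by auto
    have "(\<Sum>T\<in>Pow X. if k ` X \<subseteq> T then (-1) ^ card (X - T) * (\<Prod>y\<in>X. g y (k y)) else 0)
        = (\<Sum>T\<in>Pow X. if k ` X \<subseteq> T then (-1::complex) ^ card (X - T) else 0) * (\<Prod>y\<in>X. g y (k y))"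
      unfolding sum_distrib_right by (rule sum.cong) auto
    also have "\<dots> = (if k ` X = X then (\<Prod>y\<in>X. g y (k y)) else 0)"
      using alt_sum_sup[OF X kX] by simp
    finally show "(\<Sum>T\<in>Pow X. if k ` X \<subseteq> T then (-1) ^ card (X - T) * (\<Prod>y\<in>X. g y (k y)) else 0)
        = (if k ` X = X then (\<Prod>y\<in>X. g y (k y)) else 0)" .
  qed
  also have "\<dots> = (\<Sum>k\<in>{k\<in>?P. k ` X = X}. \<Prod>y\<in>X. g y (k y))"
    using fP by (simp add: sum.inter_filter)
  also have "\<dots> = (\<Sum>\<sigma>\<in>{p. p permutes X}. \<Prod>y\<in>X. g y (\<sigma> y))"
  proof (rule sum.reindex_bij_witness[where i="\<lambda>\<sigma>. restrict \<sigma> X" and j="\<lambda>k x. if x \<in> X then k x else x"])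
    fix k assume k: "k \<in> {k\<in>?P. k ` X = X}"
    then show "restrict (\<lambda>x. if x \<in> X then k x else x) X = k"
      by (auto simp: restrict_def fun_eq_iff PiE_def extensional_def)
    have "inj_on k X" using k X by (simp add: eq_card_imp_inj_on)
    then have "bij_betw (\<lambda>x. if x \<in> X then k x else x) X X"
      using k by (auto simp: bij_betw_def inj_on_def image_def)
    then show "(\<lambda>x. if x \<in> X then k x else x) \<in> {p. p permutes X}"
      by (auto intro!: bij_imp_permutes)
    show "(\<Prod>y\<in>X. g y (if y \<in> X then k y else y)) = (\<Prod>y\<in>X. g y (k y))"
      by (rule prod.cong) auto
  next
    fix \<sigma> assume s: "\<sigma> \<in> {p. p permutes X}"
    then show "(\<lambda>x. if x \<in> X then restrict \<sigma> X x else x) = \<sigma>"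
      by (auto simp: fun_eq_iff permutes_not_in)
    show "restrict \<sigma> X \<in> {k\<in>?P. k ` X = X}"
      using s by (auto simp: permutes_in_image permutes_image)
  qed
  finally show ?thesis by simp
qed



definition PiS :: "('b \<Rightarrow> 'b \<Rightarrow> complex) \<Rightarrow> 'a set \<Rightarrow> ('a::finite, 'b::finite) hop" where
  "PiS PS A = (\<lambda>c c'. if agree A c c' then (\<Prod>x\<in>A. PS (c x) (c' x)) else 0)"

lemma PiS_empty: "PiS PS {} = Idk"
  by (auto simp: fun_eq_iff PiS_def Idk_def agree_def)

lemma PiS_insert: fixes PS :: "'b::finite \<Rightarrow> 'b \<Rightarrow> complex" and A :: "'a::finite set"
  assumes "a \<notin> A" shows "PiS PS (insert a A) = op_mult (lift a PS) (PiS PS A)"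
proof (intro ext)
  fix c c' :: "'a \<Rightarrow> 'b"
  have fA: "finite A" by simp
  have ag: "agree A (c(a := b)) c' \<longleftrightarrow> b = c' a \<and> agree (insert a A) c c'" for b
    using assms unfolding agree_def by auto
  have pr: "(\<Prod>x\<in>A. PS ((c(a := b)) x) (c' x)) = (\<Prod>x\<in>A. PS (c x) (c' x))" for b
    using assms by (intro prod.cong) auto
  have "op_mult (lift a PS) (PiS PS A) c c' = (\<Sum>b\<in>UNIV. PS (c a) b * PiS PS A (c(a := b)) c')"
    by (simp add: op_mult_apply op_apply_lift)
  also have "\<dots> = (\<Sum>b\<in>UNIV. if b = c' a then (if agree (insert a A) c c' then PS (c a) b * (\<Prod>x\<in>A. PS (c x) (c' x)) else 0) else 0)"
  proof (rule sum.cong[OF refl])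
    fix b
    have "PiS PS A (c(a := b)) c' = (if b = c' a \<and> agree (insert a A) c c' then (\<Prod>x\<in>A. PS (c x) (c' x)) else 0)"
      unfolding PiS_def ag pr by simp
    then show "PS (c a) b * PiS PS A (c(a := b)) c' = (if b = c' a then (if agree (insert a A) c c' then PS (c a) b * (\<Prod>x\<in>A. PS (c x) (c' x)) else 0) else 0)"
      by simp
  qed
  also have "\<dots> = PiS PS (insert a A) c c'"
    using assms fA by (simp add: PiS_def)
  finally show "PiS PS (insert a A) c c' = op_mult (lift a PS) (PiS PS A) c c'" by simp
qed

lemma InI_PiS:
  assumes P1: "\<And>x. x \<in> X \<Longrightarrow> P1 x = Idk - lift x PS" and A: "A \<subseteq> X"
  shows "InI X Ed P1 P2 (Idk - PiS PS A)"
proof -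
  have "finite A" by simp
  then show ?thesis using A
  proof (induction A rule: finite_induct)
    case empty
    have z0: "Idk - PiS PS {} = 0" by (simp add: PiS_empty fun_eq_iff)
    show ?case unfolding z0 by (rule InI_zero)
  next
    case (insert a A)
    have "Idk - PiS PS (insert a A) = (Idk - lift a PS) + op_mult (lift a PS) (Idk - PiS PS A)"
      using insert(2) by (simp add: PiS_insert op_mult_diff_right fun_eq_iff)
    moreover have "InI X Ed P1 P2 (Idk - lift a PS)"
    proof -
      have "InI X Ed P1 P2 (P1 a)" by (rule InI_P1) (use insert in auto)
      then show ?thesis using P1 insert(4) by simp
    qed
    moreover have "InI X Ed P1 P2 (op_mult (lift a PS) (Idk - PiS PS A))"
    proof -
      have AX: "A \<subseteq> X" "a \<in> X" using insert(4) by auto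
      show ?thesis by (rule InI_lmult[OF AW_mono[OF _ AW_lift] insert.IH[OF AX(1)]]) (use AX in auto)
    qed
    ultimately show ?case using InI_add by metis
  qed
qed

definition tr :: "'a set \<Rightarrow> 'a \<Rightarrow> 'a" where
  "tr e = (let p = (SOME p. e = {fst p, snd p} \<and> fst p \<noteq> snd p) in Transposition.transpose (fst p) (snd p))"

lemma tr_pair: assumes "x \<noteq> y" shows "tr {x, y} = Transposition.transpose x y"
proof -
  have "\<exists>p. {x, y} = {fst p, snd p} \<and> fst p \<noteq> snd p" using assms by (intro exI[of _ "(x, y)"]) auto
  obtain p where p: "p = (SOME p. {x, y} = {fst p, snd p} \<and> fst p \<noteq> snd p)" by blast
  have "{x, y} = {fst p, snd p}" using someI_ex[OF \<open>\<exists>p. _\<close>] p by simp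
  then have "(fst p = x \<and> snd p = y) \<or> (fst p = y \<and> snd p = x)" by (auto simp: doubleton_eq_iff)
  then show ?thesis unfolding tr_def p[symmetric] Let_def by (auto simp: transpose_commute)
qed

lemma InI_comp:
  assumes "\<sigma> permutes X" "InI X Ed P1 P2 (Idk - Pm \<sigma>)" "InI X Ed P1 P2 (Idk - Pm \<rho>)"
  shows "InI X Ed P1 P2 (Idk - Pm (\<sigma> \<circ> \<rho>))"
proof -
  have eq: "Idk - Pm (\<sigma> \<circ> \<rho>) = (Idk - Pm \<sigma>) + op_mult (Pm \<sigma>) (Idk - Pm \<rho>)"
    by (simp add: Pm_comp op_mult_diff_right fun_eq_iff)
  have "InI X Ed P1 P2 (op_mult (Pm \<sigma>) (Idk - Pm \<rho>))"
    by (rule InI_lmult[OF AW_Pm[OF assms(1)] assms(3)])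
  from InI_add[OF assms(2) this] show ?thesis by (simp only: eq)
qed

lemma InI_transp:
  assumes P2: "\<And>e. e \<in> edges_in E X \<Longrightarrow> P2 e = osc (1/2) (Idk - Pm (tr e))"
    and irr: "irreflp E" and aX: "a \<in> X"
    and path: "(\<lambda>u v. u \<in> X \<and> v \<in> X \<and> E u v)\<^sup>*\<^sup>* a b"
  shows "InI X (edges_in E X) P1 P2 (Idk - Pm (Transposition.transpose a b))"
  using path
proof (induction b rule: rtranclp_induct)
  case base
  have z0: "Idk - Pm (Transposition.transpose a a) = 0" by (auto simp: fun_eq_iff Pm_def Idk_def)
  show ?case unfolding z0 by (rule InI_zero)
next
  case (step y z)
  then have yz: "y \<in> X" "z \<in> X" "E y z" by auto
  have ne: "y \<noteq> z" using irr yz(3) by (auto simp: irreflp_def)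
  have edge: "InI X (edges_in E X) P1 P2 (Idk - Pm (Transposition.transpose y z))"
  proof -
    have e: "{y, z} \<in> edges_in E X" using yz unfolding edges_in_def by blast
    have "Idk - Pm (Transposition.transpose y z) = osc 2 (P2 {y, z})"
      using P2[OF e] tr_pair[OF ne] by (simp add: osc_def fun_eq_iff) (metis mult.commute)
    then show ?thesis using InI_osc[OF InI_P2[OF e]] by simp
  qed
  show ?case
  proof (cases "z = a")
    case True
    have z0: "Idk - Pm (Transposition.transpose a z) = 0" using True by (auto simp: fun_eq_iff Pm_def Idk_def)
    show ?thesis unfolding z0 by (rule InI_zero)
  next
    case za: False
    show ?thesis
    proof (cases "y = a")
      case True then show ?thesis using edge by (simp only:)
    next
      case ya: False
      have eq: "Transposition.transpose a z = (Transposition.transpose y z \<circ> Transposition.transpose a y) \<circ> Transposition.transpose y z"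
        using za ya ne by (auto simp: fun_eq_iff Transposition.transpose_def)
      have p1: "Transposition.transpose y z permutes X" using yz by (simp add: permutes_swap_id)
      have p2: "Transposition.transpose a y permutes X" using yz aX by (simp add: permutes_swap_id)
      have "InI X (edges_in E X) P1 P2 (Idk - Pm (Transposition.transpose y z \<circ> Transposition.transpose a y))"
        by (rule InI_comp[OF p1 edge step.IH])
      then show ?thesis unfolding eq
        by (rule InI_comp[OF permutes_compose[OF p2 p1] _ edge])
    qed
  qed
qed

lemma InI_perm:
  assumes P2: "\<And>e. e \<in> edges_in E X \<Longrightarrow> P2 e = osc (1/2) (Idk - Pm (tr e))"
    and irr: "irreflp E" and conn: "connected_in E X" and s: "\<sigma> permutes X"
  shows "InI X (edges_in E X) P1 P2 (Idk - Pm \<sigma>)"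
proof -
  have "finite X" by simp
  from s this show ?thesis
  proof (induction rule: permutes_induct)
    case id
    have z0: "Idk - Pm id = 0" by (auto simp: fun_eq_iff Pm_def Idk_def)
    show ?case unfolding z0 by (rule InI_zero)
  next
    case (swap a b p)
    have "InI X (edges_in E X) P1 P2 (Idk - Pm (Transposition.transpose a b))"
      using InI_transp[OF P2 irr swap(1)] conn swap(1,2) unfolding connected_in_def by blast
    moreover from swap have "InI X (edges_in E X) P1 P2 (Idk - Pm p)" by blast
    ultimately show ?case by (rule InI_comp[OF permutes_swap_id[OF swap(1,2)]])
  qed
qed



lemma prodvec_Sym:
  fixes \<phi> :: "'b::finite \<Rightarrow> complex"
  assumes "\<phi> \<in> S"
  shows "(\<lambda>d :: 'a::finite \<Rightarrow> 'b. \<Prod>y\<in>UNIV. \<phi> (d y)) \<in> Sym S"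
  unfolding Sym_def
proof (intro CollectI conjI allI impI)
  show "(\<lambda>d. \<Prod>y\<in>UNIV. \<phi> (d y)) \<in> tensor_power S"
    unfolding tensor_power_def
    by (rule CollectI, rule exI[of _ 1], rule exI[of _ "\<lambda>_. 1"], rule exI[of _ "\<lambda>_ _. \<phi>"]) (simp add: assms)
  fix \<sigma> :: "'a \<Rightarrow> 'a" assume b: "bij \<sigma>"
  show "perm_vec \<sigma> (\<lambda>d :: 'a \<Rightarrow> 'b. \<Prod>y\<in>UNIV. \<phi> (d y)) = (\<lambda>d. \<Prod>y\<in>UNIV. \<phi> (d y))"
    unfolding perm_vec_def o_def
  proof
    fix c :: "'a \<Rightarrow> 'b"
    show "(\<Prod>y\<in>UNIV. \<phi> (c (\<sigma> y))) = (\<Prod>y\<in>UNIV. \<phi> (c y))"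
      using prod.reindex_bij_betw[of \<sigma> UNIV UNIV "\<lambda>y. \<phi> (c y)"] b by simp
  qed
qed

lemma local_killed:
  fixes Op :: "('a::finite, 'b::finite) hop"
  assumes AW: "acts_within X Op" and Xne: "X \<noteq> {}"
    and kill: "\<forall>v\<in>Sym S. op_apply Op v = (\<lambda>_. 0)" and phi: "\<phi> \<in> S"
  shows "(\<Sum>d\<in>UNIV. Op c d * (if agree X d e then (\<Prod>y\<in>X. \<phi> (d y)) else 0)) = 0"
proof (cases "\<phi> = (\<lambda>_. 0)")
  case True
  obtain x0 where "x0 \<in> X" using Xne by blast
  then have z: "(\<Prod>y\<in>X. \<phi> (d y)) = 0" for d by (subst prod_zero_iff) (use True in auto)
  show ?thesis by (simp only: z if_cancel mult_zero_right sum.neutral_const)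
next
  case False
  then obtain b0 where b0: "\<phi> b0 \<noteq> 0" by auto
  define F where "F d = (\<Prod>y\<in>X. \<phi> (d y))" for d :: "'a \<Rightarrow> 'b"
  have k0: "(\<Sum>d\<in>UNIV. Op c d * (\<Prod>y\<in>UNIV. \<phi> (d y))) = 0" for c
    using fun_cong[OF kill[rule_format, OF prodvec_Sym[OF phi]], of c] by (simp add: op_apply_def)
  show ?thesis
  proof (cases "agree X c e")
    case False
    have "Op c d * (if agree X d e then F d else 0) = 0" for d
    proof (cases "agree X c d")
      case True
      then have "\<not> agree X d e" using False agree_trans by blast
      then show ?thesis by simp
    qed (simp add: AW_out[OF AW])
    then show ?thesis unfolding F_def by (intro sum.neutral ballI) blast
  next
    case True
    have s1: "(\<Sum>d\<in>UNIV. Op c d * (if agree X d e then F d else 0)) = (\<Sum>d\<in>UNIV. Op c d * F d)"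
    proof (rule sum.cong[OF refl])
      fix d
      show "Op c d * (if agree X d e then F d else 0) = Op c d * F d"
      proof (cases "agree X d e")
        case False
        then have "\<not> agree X c d" using True agree_trans agree_sym by blast
        then show ?thesis by (simp add: AW_out[OF AW])
      qed simp
    qed
    define cs where "cs = mrg X c (\<lambda>_. b0)"
    have "(\<Sum>d\<in>UNIV. Op c d * F d) = (\<Sum>d\<in>UNIV. Op cs d * F d)"
    proof (rule fiber_reindex[where Y=X and c=c and c'=cs])
      fix d assume "\<not> agree X d c"
      then show "Op c d * F d = 0" using AW_out[OF AW] agree_sym by fastforce
    next
      fix d assume "\<not> agree X d cs"
      then show "Op cs d * F d = 0" using AW_out[OF AW] agree_sym by fastforce
    next
      fix d assume d: "agree X d c"
      have "Op c d = Op cs (mrg X d cs)"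
        by (rule AW_loc[OF AW]) (use d in \<open>auto simp: agree_def mrg_def cs_def\<close>)
      moreover have "F d = F (mrg X d cs)" unfolding F_def by (rule prod.cong) (auto simp: mrg_def)
      ultimately show "Op c d * F d = Op cs (mrg X d cs) * F (mrg X d cs)" by simp
    qed
    moreover
    define K where "K = (\<Prod>y\<in>-X. \<phi> b0)"
    have K0: "K \<noteq> 0" unfolding K_def using b0 by (simp add: prod_zero_iff)
    have "(\<Sum>d\<in>UNIV. Op cs d * (\<Prod>y\<in>UNIV. \<phi> (d y))) = K * (\<Sum>d\<in>UNIV. Op cs d * F d)"
      unfolding sum_distrib_left
    proof (rule sum.cong[OF refl])
      fix d
      show "Op cs d * (\<Prod>y\<in>UNIV. \<phi> (d y)) = K * (Op cs d * F d)"
      proof (cases "agree X cs d")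
        case True
        have "(\<Prod>y\<in>UNIV. \<phi> (d y)) = F d * (\<Prod>y\<in>-X. \<phi> (d y))"
        proof -
          have "(\<Prod>y\<in>UNIV. \<phi> (d y)) = (\<Prod>y\<in>X \<union> -X. \<phi> (d y))" by (simp add: Compl_partition)
          also have "\<dots> = F d * (\<Prod>y\<in>-X. \<phi> (d y))" unfolding F_def by (rule prod.union_disjoint) auto
          finally show ?thesis .
        qed
        also have "(\<Prod>y\<in>-X. \<phi> (d y)) = K"
          unfolding K_def using True by (intro prod.cong) (auto simp: agree_def cs_def mrg_def)
        finally show ?thesis by simp
      qed (simp add: AW_out[OF AW])
    qed
    then have "K * (\<Sum>d\<in>UNIV. Op cs d * F d) = 0" using k0[of cs] by simp
    then have "(\<Sum>d\<in>UNIV. Op cs d * F d) = 0" using K0 by simp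
    ultimately have "(\<Sum>d\<in>UNIV. Op c d * (if agree X d e then F d else 0)) = 0" using s1 by simp
    then show ?thesis unfolding F_def .
  qed
qed



lemma Pm_PiS:
  assumes s: "\<sigma> permutes X"
  shows "op_mult (Pm \<sigma>) (PiS PS X) d e = (if agree X d e then (\<Prod>y\<in>X. PS (d y) (e (inv \<sigma> y))) else 0)"
proof -
  have "op_mult (Pm \<sigma>) (PiS PS X) d e = PiS PS X (d \<circ> \<sigma>) e"
    by (simp add: op_mult_apply op_apply_Pm)
  moreover have "agree X (d \<circ> \<sigma>) e \<longleftrightarrow> agree X d e"
    using s by (auto simp: agree_def permutes_not_in)
  moreover have "(\<Prod>x\<in>X. PS ((d \<circ> \<sigma>) x) (e x)) = (\<Prod>y\<in>X. PS (d y) (e (inv \<sigma> y)))"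
  proof -
    have "(\<Prod>y\<in>X. PS (d y) (e (inv \<sigma> y))) = (\<Prod>x\<in>X. ((\<lambda>y. PS (d y) (e (inv \<sigma> y))) \<circ> \<sigma>) x)"
      by (rule prod.permute[OF s])
    also have "\<dots> = (\<Prod>x\<in>X. PS ((d \<circ> \<sigma>) x) (e x))"
      using permutes_inverses(2)[OF s] by simp
    finally show ?thesis by simp
  qed
  ultimately show ?thesis by (simp add: PiS_def)
qed

lemma Q_killed:
  fixes Op :: "('a::finite, 'b::finite) hop" and PS :: "'b \<Rightarrow> 'b \<Rightarrow> complex"
  assumes AW: "acts_within X Op" and Xne: "X \<noteq> {}"
    and kill: "\<forall>v\<in>Sym S. op_apply Op v = (\<lambda>_. 0)" and S: "is_subspace S"
    and col: "\<forall>b'. (\<lambda>b. PS b b') \<in> S"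
  shows "op_mult Op (op_mult (osc k (\<Sum>\<sigma>\<in>{p. p permutes X}. Pm \<sigma>)) (PiS PS X)) = 0"
proof (intro ext)
  fix c e :: "'a \<Rightarrow> 'b"
  define phi where "phi T b = (\<Sum>x\<in>T. PS b (e x))" for T b
  define G where "G T d = (if agree X d e then (\<Prod>y\<in>X. phi T (d y)) else 0)" for T d
  have phiS: "phi T \<in> S" for T
    unfolding phi_def by (rule subspace_closed_sum[OF S]) (use col in auto)
  have Qd: "op_mult (osc k (\<Sum>\<sigma>\<in>{p. p permutes X}. Pm \<sigma>)) (PiS PS X) d e
      = k * (\<Sum>T\<in>Pow X. (-1) ^ card (X - T) * G T d)" for d
  proof -
    have "op_mult (osc k (\<Sum>\<sigma>\<in>{p. p permutes X}. Pm \<sigma>)) (PiS PS X) d e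
        = k * (\<Sum>\<sigma>\<in>{p. p permutes X}. op_mult (Pm \<sigma>) (PiS PS X) d e)"
      by (simp only: op_mult_osc_left op_mult_sum_left) (simp add: osc_def sum_kapply)
    also have "(\<Sum>\<sigma>\<in>{p. p permutes X}. op_mult (Pm \<sigma>) (PiS PS X) d e)
        = (\<Sum>\<sigma>\<in>{p. p permutes X}. if agree X d e then (\<Prod>y\<in>X. PS (d y) (e (inv \<sigma> y))) else 0)"
      by (rule sum.cong) (auto simp: Pm_PiS)
    also have "\<dots> = (\<Sum>T\<in>Pow X. (-1) ^ card (X - T) * G T d)"
    proof (cases "agree X d e")
      case True
      have "(\<Sum>\<sigma>\<in>{p. p permutes X}. \<Prod>y\<in>X. PS (d y) (e (inv \<sigma> y)))
          = (\<Sum>\<sigma>\<in>{p. p permutes X}. \<Prod>y\<in>X. PS (d y) (e (\<sigma> y)))"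
        by (rule sum_permutations_inverse[symmetric])
      also have "\<dots> = (\<Sum>T\<in>Pow X. (-1) ^ card (X - T) * (\<Prod>y\<in>X. \<Sum>x\<in>T. PS (d y) (e x)))"
        by (rule polar) simp
      finally show ?thesis using True by (simp add: G_def phi_def)
    qed (simp add: G_def)
    finally show ?thesis .
  qed
  have "op_mult Op (op_mult (osc k (\<Sum>\<sigma>\<in>{p. p permutes X}. Pm \<sigma>)) (PiS PS X)) c e
      = (\<Sum>d\<in>UNIV. \<Sum>T\<in>Pow X. k * (-1) ^ card (X - T) * (Op c d * G T d))"
    unfolding op_mult_def[of Op] Qd by (simp add: sum_distrib_left mult_ac)
  also have "\<dots> = (\<Sum>T\<in>Pow X. k * (-1) ^ card (X - T) * (\<Sum>d\<in>UNIV. Op c d * G T d))"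
    by (subst sum.swap) (simp add: sum_distrib_left)
  also have "\<dots> = 0"
    using local_killed[OF AW Xne kill phiS] by (simp add: G_def)
  finally show "op_mult Op (op_mult (osc k (\<Sum>\<sigma>\<in>{p. p permutes X}. Pm \<sigma>)) (PiS PS X)) c e = 0 c e" by simp
qed



lemma sum_delta_l: fixes f :: "'k::finite \<Rightarrow> complex" shows "(\<Sum>k\<in>UNIV. (if b = k then 1 else 0) * f k) = (f b :: complex)"
proof -
  have "(\<Sum>k\<in>UNIV. (if b = k then 1 else 0) * f k) = (\<Sum>k\<in>UNIV. if b = k then f k else 0)"
    by (rule sum.cong) auto
  then show ?thesis by simp
qed

lemma sum_delta_r: fixes f :: "'k::finite \<Rightarrow> complex" shows "(\<Sum>k\<in>UNIV. f k * (if k = b then 1 else 0)) = (f b :: complex)"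
proof -
  have "(\<Sum>k\<in>UNIV. f k * (if k = b then 1 else 0)) = (\<Sum>k\<in>UNIV. if b = k then f k else 0)"
    by (rule sum.cong) auto
  then show ?thesis by simp
qed

lemma P1_proj:
  fixes PS :: "'b::finite \<Rightarrow> 'b \<Rightarrow> complex"
  assumes col: "\<forall>b'. (\<lambda>b. PS b b') \<in> S" and fx: "\<forall>v\<in>S. \<forall>b. (\<Sum>b'\<in>UNIV. PS b b' * v b') = v b"
    and sa: "\<forall>b b'. PS b b' = cnj (PS b' b)"
  shows "projector (Idk - lift x PS :: ('a::finite, 'b) hop)"
proof -
  define M where "M b b' = (if b = b' then 1 else 0) - PS b b'" for b b'
  have eq: "(Idk - lift x PS :: ('a, 'b) hop) = lift x M"
    unfolding Id_lift[of x] lift_diff M_def ..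
  have MM: "(\<lambda>b b'. \<Sum>k\<in>UNIV. M b k * M k b') = M"
  proof (intro ext)
    fix b b'
    have "(\<Sum>k\<in>UNIV. M b k * M k b') = (\<Sum>k\<in>UNIV. (if b = k then 1 else 0) * (if k = b' then 1 else 0))
        - (\<Sum>k\<in>UNIV. (if b = k then 1 else 0) * PS k b') - (\<Sum>k\<in>UNIV. PS b k * (if k = b' then 1 else 0))
        + (\<Sum>k\<in>UNIV. PS b k * PS k b')"
    proof -
      have "(\<Sum>k\<in>UNIV. M b k * M k b') = (\<Sum>k\<in>UNIV. (if b = k then 1 else 0) * (if k = b' then 1 else 0)
        - (if b = k then 1 else 0) * PS k b' - PS b k * (if k = b' then 1 else 0) + PS b k * PS k b')"
        by (rule sum.cong[OF refl]) (simp add: M_def algebra_simps)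
      then show ?thesis by (simp only: sum.distrib sum_subtractf)
    qed
    also have "(\<Sum>k\<in>UNIV. PS b k * PS k b') = PS b b'" using fx[rule_format, OF col[rule_format, of b'], of b] by simp
    finally show "(\<Sum>k\<in>UNIV. M b k * M k b') = M b b'"
      by (simp only: sum_delta_l sum_delta_r) (simp add: M_def)
  qed
  have sM: "M b b' = cnj (M b' b)" for b b' using sa[rule_format, of b b'] by (simp add: M_def)
  show ?thesis unfolding projector_def eq
  proof
    show "op_mult (lift x M) (lift x M) = lift x M" by (simp add: lift_mult MM)
    show "\<forall>c c'. lift x M c c' = cnj (lift x M c' c)"
    proof (intro allI)
      fix c c' :: "'a \<Rightarrow> 'b"
      have "agree {x} c' c = agree {x} c c'" using agree_sym by blast
      then show "lift x M c c' = cnj (lift x M c' c)" using sM[of "c x" "c' x"] by (simp add: lift_def)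
    qed
  qed
qed

lemma lift_fix:
  fixes PS :: "'b::finite \<Rightarrow> 'b \<Rightarrow> complex"
  assumes fx: "\<forall>v\<in>S. \<forall>b. (\<Sum>b'\<in>UNIV. PS b b' * v b') = v b"
    and v: "v \<in> tensor_power S"
  shows "op_apply (lift x PS) v c = v (c :: 'a::finite \<Rightarrow> 'b)"
proof -
  from v obtain n and a :: "nat \<Rightarrow> complex" and \<phi> :: "nat \<Rightarrow> 'a \<Rightarrow> 'b \<Rightarrow> complex" where nap: "(\<forall>i<n. \<forall>x. \<phi> i x \<in> S) \<and> v = (\<lambda>c. \<Sum>i<n. a i * (\<Prod>x\<in>UNIV. \<phi> i x (c x)))"
    unfolding tensor_power_def mem_Collect_eq by (elim exE) (erule that)
  then have ph: "\<forall>i<n. \<forall>x. \<phi> i x \<in> S"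
    and vdef: "v = (\<lambda>c. \<Sum>i<n. a i * (\<Prod>x\<in>UNIV. \<phi> i x (c x)))" by auto
  define R where "R i = (\<Prod>y\<in>UNIV - {x}. \<phi> i y (c y))" for i
  have split: "(\<Prod>y\<in>UNIV. \<phi> i y (d y)) = \<phi> i x (d x) * (\<Prod>y\<in>UNIV - {x}. \<phi> i y (d y))" for i d
    by (rule prod.remove) auto
  have upd: "(\<Prod>y\<in>UNIV. \<phi> i y ((c(x := b)) y)) = \<phi> i x b * R i" for i b
  proof -
    have "(\<Prod>y\<in>UNIV - {x}. \<phi> i y ((c(x := b)) y)) = R i"
      unfolding R_def by (rule prod.cong) auto
    then show ?thesis using split[of i "c(x := b)"] by simp
  qed
  have vupd: "v (c(x := b)) = (\<Sum>i<n. a i * (\<phi> i x b * R i))" for b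
    unfolding vdef upd ..
  have "op_apply (lift x PS) v c = (\<Sum>b\<in>UNIV. PS (c x) b * (\<Sum>i<n. a i * (\<phi> i x b * R i)))"
    unfolding op_apply_lift vupd ..
  also have "\<dots> = (\<Sum>b\<in>UNIV. \<Sum>i<n. a i * R i * (PS (c x) b * \<phi> i x b))"
    unfolding sum_distrib_left by (rule sum.cong[OF refl], rule sum.cong[OF refl]) (simp add: mult_ac)
  also have "\<dots> = (\<Sum>i<n. \<Sum>b\<in>UNIV. a i * R i * (PS (c x) b * \<phi> i x b))"
    by (rule sum.swap)
  also have "\<dots> = (\<Sum>i<n. a i * R i * \<phi> i x (c x))"
  proof (rule sum.cong[OF refl])
    fix i assume "i \<in> {..<n}"
    then have "\<phi> i x \<in> S" using ph by blast
    then have "(\<Sum>b\<in>UNIV. PS (c x) b * \<phi> i x b) = \<phi> i x (c x)" using fx by blast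
    then show "(\<Sum>b\<in>UNIV. a i * R i * (PS (c x) b * \<phi> i x b)) = a i * R i * \<phi> i x (c x)"
      by (simp add: sum_distrib_left[symmetric])
  qed
  also have "\<dots> = v c"
  proof -
    have "v c = (\<Sum>i<n. a i * (\<phi> i x (c x) * R i))" unfolding vdef split R_def ..
    then show ?thesis by (simp add: mult_ac)
  qed
  finally show ?thesis .
qed

lemma P1_kill:
  fixes PS :: "'b::finite \<Rightarrow> 'b \<Rightarrow> complex"
  assumes fx: "\<forall>v\<in>S. \<forall>b. (\<Sum>b'\<in>UNIV. PS b b' * v b') = v b"
  shows "\<forall>v\<in>Sym S. op_apply (Idk - lift x PS :: ('a::finite, 'b) hop) v = (\<lambda>_. 0)"
proof (intro ballI ext)
  fix v :: "('a, 'b) hvec" and c assume "v \<in> Sym S"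
  then have "v \<in> tensor_power S" by (simp add: Sym_def)
  then show "op_apply (Idk - lift x PS) v c = 0"
    by (simp add: op_apply_diff lift_fix[OF fx])
qed

lemma P2_proj:
  assumes inv: "\<tau> \<circ> \<tau> = id"
  shows "projector (osc (1/2) (Idk - Pm \<tau>) :: ('a::finite, 'b::finite) hop)"
proof -
  have i2: "c \<circ> \<tau> \<circ> \<tau> = c" for c :: "'a \<Rightarrow> 'b" by (simp add: o_assoc[symmetric] inv)
  have sw: "(c' = c \<circ> \<tau>) \<longleftrightarrow> (c = c' \<circ> \<tau>)" for c c' :: "'a \<Rightarrow> 'b" using i2 by metis
  let ?P = "osc (1/2) (Idk - Pm \<tau>) :: ('a, 'b) hop"
  show ?thesis unfolding projector_def
  proof (intro conjI allI ext)
    fix c c' :: "'a \<Rightarrow> 'b"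
    have "op_mult ?P ?P c c' = (1/2) * (?P c c' - ?P (c \<circ> \<tau>) c')"
      by (simp add: op_mult_apply op_apply_osc op_apply_diff op_apply_Pm)
    then show "op_mult ?P ?P c c' = ?P c c'"
      using i2[of c] sw[of c' c]
      by (auto simp: osc_def Idk_def Pm_def)
    show "?P c c' = cnj (?P c' c)"
      using sw[of c' c] by (auto simp: osc_def Idk_def Pm_def)
  qed
qed

lemma P2_kill:
  assumes b: "bij \<tau>"
  shows "\<forall>v\<in>Sym S. op_apply (osc (1/2) (Idk - Pm \<tau>) :: ('a::finite, 'b::finite) hop) v = (\<lambda>_. 0)"
proof (intro ballI ext)
  fix v :: "('a, 'b) hvec" and c assume "v \<in> Sym S"
  then have "perm_vec \<tau> v = v" using b by (simp add: Sym_def)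
  then have "v (c \<circ> \<tau>) = v c" unfolding perm_vec_def by metis
  then show "op_apply (osc (1/2) (Idk - Pm \<tau>)) v c = 0"
    by (simp add: op_apply_osc op_apply_diff op_apply_Pm)
qed



theorem lemma7p1:
  fixes E :: "'a::finite \<Rightarrow> 'a \<Rightarrow> bool"
    and S :: "('b::finite \<Rightarrow> complex) set"
    and X :: "'a set"
    and Op :: "('a, 'b) hop"
  assumes "symp E" and "irreflp E"
    and "is_subspace S"
    and "connected_in E X"
    and "acts_within X Op"
    and "\<forall>v\<in>Sym S. op_apply Op v = (\<lambda>_. 0)"
  shows "\<exists>(oc1 :: 'a \<Rightarrow> ('a, 'b) hop) (P1 :: 'a \<Rightarrow> ('a, 'b) hop)
            (oc2 :: 'a set \<Rightarrow> ('a, 'b) hop) (P2 :: 'a set \<Rightarrow> ('a, 'b) hop).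
     (\<forall>x\<in>X. acts_within X (oc1 x) \<and> projector (P1 x) \<and> acts_within {x} (P1 x)
              \<and> (\<forall>v\<in>Sym S. op_apply (P1 x) v = (\<lambda>_. 0)))
   \<and> (\<forall>e\<in>edges_in E X. acts_within X (oc2 e) \<and> projector (P2 e) \<and> acts_within e (P2 e)
              \<and> (\<forall>v\<in>Sym S. op_apply (P2 e) v = (\<lambda>_. 0)))
   \<and> Op = (\<lambda>c c'. (\<Sum>x\<in>X. op_mult (oc1 x) (P1 x) c c') + (\<Sum>e\<in>edges_in E X. op_mult (oc2 e) (P2 e) c c'))"
proof -
  note irr = assms(2) and S = assms(3) and conn = assms(4) and AWO = assms(5) and kill = assms(6)
  have Xne: "X \<noteq> {}" using conn by (simp add: connected_in_def)
  obtain PS :: "'b \<Rightarrow> 'b \<Rightarrow> complex" where col: "\<forall>b'. (\<lambda>b. PS b b') \<in> S"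
    and fx: "\<forall>v\<in>S. \<forall>b. (\<Sum>b'\<in>UNIV. PS b b' * v b') = v b" and sa: "\<forall>b b'. PS b b' = cnj (PS b' b)"
    using proj_exists[OF S] by blast
  define P1 :: "'a \<Rightarrow> ('a, 'b) hop" where "P1 x = Idk - lift x PS" for x
  define P2 :: "'a set \<Rightarrow> ('a, 'b) hop" where "P2 e = osc (1/2) (Idk - Pm (tr e))" for e
  define Pe where "Pe = {p. p permutes X}"
  define A :: "('a, 'b) hop" where "A = osc (1 / of_nat (fact (card X))) (\<Sum>\<sigma>\<in>Pe. Pm \<sigma>)"
  define Q where "Q = op_mult A (PiS PS X)"
  have AWA: "acts_within X A"
    unfolding A_def by (rule AW_osc, rule AW_sum) (auto simp: Pe_def intro: AW_Pm)
  have IdA: "InI X (edges_in E X) P1 P2 (Idk - A)"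
  proof -
    have cP: "card Pe = fact (card X)" unfolding Pe_def by (rule card_permutations) simp_all
    have nz: "(of_nat (fact (card X)) :: complex) \<noteq> 0" by simp
    have "Idk - A = osc (1 / of_nat (fact (card X))) (\<Sum>\<sigma>\<in>Pe. Idk - Pm \<sigma>)"
    proof (intro ext)
      fix c c' :: "'a \<Rightarrow> 'b"
      have "osc (1 / of_nat (fact (card X))) (\<Sum>\<sigma>\<in>Pe. Idk - Pm \<sigma>) c c'
          = (1 / of_nat (fact (card X))) * (of_nat (card Pe) * Idk c c' - (\<Sum>\<sigma>\<in>Pe. Pm \<sigma> c c'))"
        by (simp add: osc_def sum_kapply sum_subtractf)
      also have "\<dots> = Idk c c' - (1 / of_nat (fact (card X))) * (\<Sum>\<sigma>\<in>Pe. Pm \<sigma> c c')"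
        using nz unfolding cP by (simp add: field_simps)
      finally show "(Idk - A) c c' = osc (1 / of_nat (fact (card X))) (\<Sum>\<sigma>\<in>Pe. Idk - Pm \<sigma>) c c'"
        by (simp add: A_def osc_def sum_kapply)
    qed
    moreover have "InI X (edges_in E X) P1 P2 (osc (1 / of_nat (fact (card X))) (\<Sum>\<sigma>\<in>Pe. Idk - Pm \<sigma>))"
      by (rule InI_osc, rule InI_sum, rule InI_perm[OF _ irr conn]) (auto simp: P2_def Pe_def)
    ultimately show ?thesis by simp
  qed
  have IQ: "InI X (edges_in E X) P1 P2 (Idk - Q)"
  proof -
    have eq: "Idk - Q = (Idk - A) + op_mult A (Idk - PiS PS X)"
      by (simp add: Q_def op_mult_diff_right fun_eq_iff)
    have "InI X (edges_in E X) P1 P2 (op_mult A (Idk - PiS PS X))"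
      by (rule InI_lmult[OF AWA], rule InI_PiS) (auto simp: P1_def)
    from InI_add[OF IdA this] show ?thesis by (simp only: eq)
  qed
  have OQ: "op_mult Op Q = 0"
    unfolding Q_def A_def Pe_def by (rule Q_killed[OF AWO Xne kill S col])
  have "Op = op_mult Op (Idk - Q)"
    by (simp add: op_mult_diff_right OQ)
  moreover have "InI X (edges_in E X) P1 P2 (op_mult Op (Idk - Q))"
    by (rule InI_lmult[OF AWO IQ])
  ultimately have "InI X (edges_in E X) P1 P2 Op" by simp
  then obtain T1 T2 where T1: "\<forall>x\<in>X. acts_within X (T1 x)" and T2: "\<forall>e\<in>edges_in E X. acts_within X (T2 e)"
    and OpEq: "Op = (\<Sum>x\<in>X. op_mult (T1 x) (P1 x)) + (\<Sum>e\<in>edges_in E X. op_mult (T2 e) (P2 e))"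
    unfolding InI_def by blast
  have H1: "\<forall>x\<in>X. acts_within X (T1 x) \<and> projector (P1 x) \<and> acts_within {x} (P1 x)
              \<and> (\<forall>v\<in>Sym S. op_apply (P1 x) v = (\<lambda>_. 0))"
  proof
    fix x assume x: "x \<in> X"
    have a: "acts_within X (T1 x)" using T1 x by blast
    have b: "projector (P1 x)" unfolding P1_def by (rule P1_proj[OF col fx sa])
    have c: "acts_within {x} (P1 x)" unfolding P1_def by (rule AW_diff[OF AW_Id AW_lift])
    have d: "\<forall>v\<in>Sym S. op_apply (P1 x) v = (\<lambda>_. 0)" unfolding P1_def by (rule P1_kill[OF fx])
    show "acts_within X (T1 x) \<and> projector (P1 x) \<and> acts_within {x} (P1 x)
              \<and> (\<forall>v\<in>Sym S. op_apply (P1 x) v = (\<lambda>_. 0))" using a b c d by blast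
  qed
  have H2: "\<forall>e\<in>edges_in E X. acts_within X (T2 e) \<and> projector (P2 e) \<and> acts_within e (P2 e)
              \<and> (\<forall>v\<in>Sym S. op_apply (P2 e) v = (\<lambda>_. 0))"
  proof
    fix e assume e: "e \<in> edges_in E X"
    then obtain y z where yz: "e = {y, z}" "y \<in> X" "z \<in> X" "E y z" unfolding edges_in_def by blast
    have ne: "y \<noteq> z" using irr yz(4) by (auto simp: irreflp_def)
    have tre: "tr e = Transposition.transpose y z" using tr_pair[OF ne] yz(1) by simp
    have a: "acts_within X (T2 e)" using T2 e by blast
    have b: "projector (P2 e)" unfolding P2_def tre by (rule P2_proj) simp
    have c: "acts_within e (P2 e)" unfolding P2_def tre unfolding yz(1)
      by (rule AW_osc, rule AW_diff[OF AW_Id], rule AW_Pm, rule permutes_swap_id) auto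
    have d: "\<forall>v\<in>Sym S. op_apply (P2 e) v = (\<lambda>_. 0)" unfolding P2_def tre by (rule P2_kill) simp
    show "acts_within X (T2 e) \<and> projector (P2 e) \<and> acts_within e (P2 e)
              \<and> (\<forall>v\<in>Sym S. op_apply (P2 e) v = (\<lambda>_. 0))" using a b c d by blast
  qed
  have H3: "Op = (\<lambda>c c'. (\<Sum>x\<in>X. op_mult (T1 x) (P1 x) c c') + (\<Sum>e\<in>edges_in E X. op_mult (T2 e) (P2 e) c c'))"
  proof (intro ext)
    fix c c'
    show "Op c c' = (\<Sum>x\<in>X. op_mult (T1 x) (P1 x) c c') + (\<Sum>e\<in>edges_in E X. op_mult (T2 e) (P2 e) c c')"
      by (subst OpEq) (simp only: plus_fun_apply sum_kapply)
  qed
  show ?thesis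
    by (rule exI[of _ T1], rule exI[of _ P1], rule exI[of _ T2], rule exI[of _ P2]) (intro conjI H1 H2 H3)
qed

end
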